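(* The following bilinear equations hold for all $k,N\in\mathbb{Z}$: \begin{align*} &Q^{(-3k+4N+2)/2}\gamma^{2}{\alpha_0}^{-3}\tau^{k+1}_{N}\tau^{k-2}_{N+1} -Q^{-3k+4N+2}\gamma^{4}{\alpha_0}^{-6}\tau^{k-1}_{N}\tau^{k}_{N+1} -\tau^{k-1}_{N+1}\tau^{k}_{N}=0,\\ &Q^{(-3k-4N-2)/2}\gamma^{-2}{\alpha_0}^{-3}\tau^{k+1}_{N+1}\tau^{k-2}_{N} -Q^{-3k-4N-2}\gamma^{-4}{\alpha_0}^{-6}\tau^{k}_{N}\tau^{k-1}_{N+1} -\tau^{k}_{N+1}\tau^{k-1}_{N}=0,\\ &\tau^{k}_{N+1}\tau^{k+1}_{N-1} -Q^{(k-4N+1)/2}\gamma^{-2}\alpha_0\tau^{k+2}_{N}\tau^{k-1}_{N} -Q^{-k+4N-1}\gamma^{4}{\alpha_0}^{-2}\tau^{k}_{N}\tau^{k+1}_{N}=0. \end{align*}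
   Context: Let $q,c,a_0,a_1,a_2\in\mathbb{C}^\times$ with $a_0a_1a_2=q$, and let $\tau_i,\overline{\tau}_i$ ($i\in\mathbb{Z}/3\mathbb{Z}$) be variables (the $\tau$ functions of the $q$-Painlevé III system, related to $f_i=q^{1/3}c^{2/3}\overline{\tau}_{i+1}\tau_{i-1}/(\tau_{i+1}\overline{\tau}_{i-1})$). The extended affine Weyl group $\widetilde{W}((A_2+A_1)^{(1)})=\langle s_0,s_1,s_2,\pi,w_0,w_1,r\rangle$ acts on them (elements act on functions from the right, $w.F(a_i,\tau_j)=F(a_i.w,\tau_j.w)$) by: $s_i(a_i)=a_i^{-1}$, $s_i(a_{i\pm1})=a_{i\pm1}a_i$, $\pi(a_i)=a_{i+1}$, $w_0,w_1,r$ fix all $a_i$; $s_i(\tau_i)=\dfrac{u_i\tau_{i+1}\overline{\tau}_{i-1}+\overline{\tau}_{i+1}\tau_{i-1}}{u_i^{1/2}\overline{\tau}_i}$, $s_i(\overline{\tau}_i)=\dfrac{v_i\overline{\tau}_{i+1}\tau_{i-1}+\tau_{i+1}\overline{\tau}_{i-1}}{v_i^{1/2}\tau_i}$, $s_i$ fixes $\tau_j,\overline{\tau}_j$ for $j\neq i$; $\pi(\tau_i)=\tau_{i+1}$, $\pi(\overline{\tau}_i)=\overline{\tau}_{i+1}$; $w_0(\overline{\tau}_i)=\dfrac{a_{i+1}^{1/3}(\overline{\tau}_i\tau_{i+1}\tau_{i+2}+u_{i-1}\tau_i\overline{\tau}_{i+1}\tau_{i+2}+u_{i+1}^{-1}\tau_i\tau_{i+1}\overline{\tau}_{i+2})}{a_{i+2}^{1/3}\overline{\tau}_{i+1}\overline{\tau}_{i+2}}$,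 $w_0(\tau_i)=\tau_i$; $r(\tau_i)=\overline{\tau}_i$, $r(\overline{\tau}_i)=\tau_i$; where $u_i=q^{-1/3}c^{-2/3}a_i$, $v_i=q^{1/3}c^{2/3}a_i$. The translation $T_4=rw_0$ fixes $a_0,a_1,a_2$ and maps $c\mapsto qc$. Set $R_1=\pi^2s_1$ (so $R_1^2=T_1=\pi s_2 s_1$) and specialize $a_2=q^{1/2}$; then $R_1$ acts on parameters as $(a_0,a_1,c)\mapsto(q^{1/2}a_0,q^{-1/2}a_1,c)$ and is the time evolution of the $q$-Painlevé II equation. Define $\tau^k_N=R_1^kT_4^N(\tau_1)$ for $k,N\in\mathbb{Z}$ (so $\tau_0=\tau^{-2}_0$, $\tau_1=\tau^0_0$, $\tau_2=\tau^{-1}_0$, $\overline{\tau}_0=\tau^{-2}_1$, $\overline{\tau}_1=\tau^0_1$, $\overline{\tau}_2=\tau^{-1}_1$), and put $\alpha_0=a_0^{1/6}$, $\gamma=c^{1/6}$, $Q=q^{1/6}$. *)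

theory Defs
  imports Complex_Main
begin

text \<open>
  To make all fractional powers occurring in the paper single-valued and
  compatible with the group action, we use root coordinates:
    qr = q^(1/12)      (so Q = q^(1/6) = qr^2, Q^(1/2) = qr, q = qr^12)
    ar i = a_i^(1/6)   (index i read mod 3; alpha_0 = ar 0)
    cr = c^(1/6)       (gamma = cr)
  and tau i, taub i are the values of tau_i, overline-tau_i (index mod 3).
  Then a_i^(1/3) = ar i ^ 2, u_i = ar i ^ 6 / (qr^4 cr^4),
  u_i^(1/2) = ar i ^ 3 / (qr^2 cr^2), v_i = qr^4 cr^4 ar i ^ 6,
  v_i^(1/2) = qr^2 cr^2 ar i ^ 3.
\<close>

record pt =
  qr   :: complex
  ar   :: "nat \<Rightarrow> complex"
  cr   :: complex
  tau  :: "nat \<Rightarrow> complex"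
  taub :: "nat \<Rightarrow> complex"

definition A :: "pt \<Rightarrow> nat \<Rightarrow> complex" where "A x i = ar x (i mod 3)"
definition T :: "pt \<Rightarrow> nat \<Rightarrow> complex" where "T x i = tau x (i mod 3)"
definition TB :: "pt \<Rightarrow> nat \<Rightarrow> complex" where "TB x i = taub x (i mod 3)"

definition uu :: "pt \<Rightarrow> nat \<Rightarrow> complex" where
  "uu x i = A x i ^ 6 / (qr x ^ 4 * cr x ^ 4)"
definition uh :: "pt \<Rightarrow> nat \<Rightarrow> complex" where
  "uh x i = A x i ^ 3 / (qr x ^ 2 * cr x ^ 2)"
definition vv :: "pt \<Rightarrow> nat \<Rightarrow> complex" where
  "vv x i = qr x ^ 4 * cr x ^ 4 * A x i ^ 6"
definition vh :: "pt \<Rightarrow> nat \<Rightarrow> complex" where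
  "vh x i = qr x ^ 2 * cr x ^ 2 * A x i ^ 3"

text \<open>
  Each generator w is represented by the (partial) map phi_w of points with
  (w.F)(x) = F(phi_w x); the map is undefined (None) where a denominator
  vanishes.  For a word w1 ... wn acting from the right,
  phi_(w1...wn) = phi_wn o ... o phi_w1, i.e. the maps are applied in word order.
\<close>

definition s_map :: "nat \<Rightarrow> pt \<Rightarrow> pt option" where
  "s_map i x =
    (if qr x \<noteq> 0 \<and> cr x \<noteq> 0 \<and> A x i \<noteq> 0 \<and> T x i \<noteq> 0 \<and> TB x i \<noteq> 0 then
      Some \<lparr> qr = qr x,
             ar = (\<lambda>j. if j mod 3 = i mod 3 then 1 / A x i else A x j * A x i),
             cr = cr x,
             tau = (\<lambda>j. if j mod 3 = i mod 3 then
                      (uu x i * T x (i+1) * TB x (i+2) + TB x (i+1) * T x (i+2)) / (uh x i * TB x i)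
                    else T x j),
             taub = (\<lambda>j. if j mod 3 = i mod 3 then
                      (vv x i * TB x (i+1) * T x (i+2) + T x (i+1) * TB x (i+2)) / (vh x i * T x i)
                    else TB x j) \<rparr>
     else None)"

definition pi_map :: "pt \<Rightarrow> pt option" where
  "pi_map x = Some \<lparr> qr = qr x, ar = (\<lambda>j. A x (j+1)), cr = cr x,
                     tau = (\<lambda>j. T x (j+1)), taub = (\<lambda>j. TB x (j+1)) \<rparr>"

definition w0_map :: "pt \<Rightarrow> pt option" where
  "w0_map x =
    (if qr x \<noteq> 0 \<and> cr x \<noteq> 0 \<and> (\<forall>i<3. A x i \<noteq> 0 \<and> TB x i \<noteq> 0) then
      Some \<lparr> qr = qr x, ar = ar x, cr = 1 / cr x, tau = tau x,
             taub = (\<lambda>i. A x (i+1) ^ 2 *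
                      (TB x i * T x (i+1) * T x (i+2)
                       + uu x (i+2) * T x i * TB x (i+1) * T x (i+2)
                       + T x i * T x (i+1) * TB x (i+2) / uu x (i+1))
                      / (A x (i+2) ^ 2 * TB x (i+1) * TB x (i+2))) \<rparr>
     else None)"

definition r_map :: "pt \<Rightarrow> pt option" where
  "r_map x =
    (if qr x \<noteq> 0 \<and> cr x \<noteq> 0 then
      Some \<lparr> qr = qr x, ar = ar x, cr = 1 / (qr x ^ 2 * cr x), tau = taub x, taub = tau x \<rparr>
     else None)"

fun word_map :: "(pt \<Rightarrow> pt option) list \<Rightarrow> pt \<Rightarrow> pt option" where
  "word_map [] x = Some x"
| "word_map (f # fs) x = Option.bind (f x) (word_map fs)"

definition R1_map :: "pt \<Rightarrow> pt option" where
  "R1_map = word_map [pi_map, pi_map, s_map 1]"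
definition R1inv_map :: "pt \<Rightarrow> pt option" where
  "R1inv_map = word_map [s_map 1, pi_map]"
definition T4_map :: "pt \<Rightarrow> pt option" where
  "T4_map = word_map [r_map, w0_map]"
definition T4inv_map :: "pt \<Rightarrow> pt option" where
  "T4inv_map = word_map [w0_map, r_map]"

definition ipow_map :: "(pt \<Rightarrow> pt option) \<Rightarrow> (pt \<Rightarrow> pt option) \<Rightarrow> int \<Rightarrow> pt \<Rightarrow> pt option" where
  "ipow_map f finv k =
     (if k \<ge> 0 then word_map (replicate (nat k) f) else word_map (replicate (nat (- k)) finv))"

definition tauKN :: "int \<Rightarrow> int \<Rightarrow> pt \<Rightarrow> complex option" where
  "tauKN k N x =
     map_option (\<lambda>y. T y 1)
       (Option.bind (ipow_map R1_map R1inv_map k x) (ipow_map T4_map T4inv_map N))"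

end

theory Submission
  imports Defs "HOL-Computational_Algebra.Polynomial"
begin

declare One_nat_def[simp del]


definition sT :: "nat \<Rightarrow> pt \<Rightarrow> pt" where
  "sT i x = \<lparr> qr = qr x,
             ar = (\<lambda>j. if j mod 3 = i mod 3 then 1 / A x i else A x j * A x i),
             cr = cr x,
             tau = (\<lambda>j. if j mod 3 = i mod 3 then
                      (uu x i * T x (i+1) * TB x (i+2) + TB x (i+1) * T x (i+2)) / (uh x i * TB x i)
                    else T x j),
             taub = (\<lambda>j. if j mod 3 = i mod 3 then
                      (vv x i * TB x (i+1) * T x (i+2) + T x (i+1) * TB x (i+2)) / (vh x i * T x i)
                    else TB x j) \<rparr>"

definition piT :: "pt \<Rightarrow> pt" where
  "piT x = \<lparr> qr = qr x, ar = (\<lambda>j. A x (j+1)), cr = cr x,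
                     tau = (\<lambda>j. T x (j+1)), taub = (\<lambda>j. TB x (j+1)) \<rparr>"

definition w0T :: "pt \<Rightarrow> pt" where
  "w0T x = \<lparr> qr = qr x, ar = ar x, cr = 1 / cr x, tau = tau x,
             taub = (\<lambda>i. A x (i+1) ^ 2 *
                      (TB x i * T x (i+1) * T x (i+2)
                       + uu x (i+2) * T x i * TB x (i+1) * T x (i+2)
                       + T x i * T x (i+1) * TB x (i+2) / uu x (i+1))
                      / (A x (i+2) ^ 2 * TB x (i+1) * TB x (i+2))) \<rparr>"

definition rT :: "pt \<Rightarrow> pt" where
  "rT x = \<lparr> qr = qr x, ar = ar x, cr = 1 / (qr x ^ 2 * cr x), tau = taub x, taub = tau x \<rparr>"

definition FF :: "pt \<Rightarrow> pt" where "FF x = sT 1 (piT (piT x))"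
definition FI :: "pt \<Rightarrow> pt" where "FI x = piT (sT 1 x)"
definition GG :: "pt \<Rightarrow> pt" where "GG x = w0T (rT x)"
definition GI :: "pt \<Rightarrow> pt" where "GI x = rT (w0T x)"

lemma two_fix[simp]: "ar x (Suc (Suc 0)) = ar x 2" "tau x (Suc (Suc 0)) = tau x 2" "taub x (Suc (Suc 0)) = taub x 2"
  "ar x (Suc 0) = ar x 1" "tau x (Suc 0) = tau x 1" "taub x (Suc 0) = taub x 1"
  by (simp_all add: numeral_2_eq_2 One_nat_def)

lemma FF_simps:
  "qr (FF x) = qr x" "cr (FF x) = cr x"
  "ar (FF x) 0 = ar x 2 * ar x 0" "ar (FF x) 1 = 1 / ar x 0" "ar (FF x) 2 = ar x 1 * ar x 0"
  "tau (FF x) 0 = tau x 2" "tau (FF x) 2 = tau x 1"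
  "tau (FF x) 1 = (ar x 0 ^ 6 / (qr x ^ 4 * cr x ^ 4) * tau x 1 * taub x 2 + taub x 1 * tau x 2)
        / (ar x 0 ^ 3 / (qr x ^ 2 * cr x ^ 2) * taub x 0)"
  "taub (FF x) 0 = taub x 2" "taub (FF x) 2 = taub x 1"
  "taub (FF x) 1 = (qr x ^ 4 * cr x ^ 4 * ar x 0 ^ 6 * taub x 1 * tau x 2 + tau x 1 * taub x 2)
        / (qr x ^ 2 * cr x ^ 2 * ar x 0 ^ 3 * tau x 0)"
  by (simp_all add: FF_def sT_def piT_def A_def T_def TB_def uu_def uh_def vv_def vh_def)

lemma FI_simps:
  "qr (FI x) = qr x" "cr (FI x) = cr x"
  "ar (FI x) 0 = 1 / ar x 1" "ar (FI x) 1 = ar x 2 * ar x 1" "ar (FI x) 2 = ar x 0 * ar x 1"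
  "tau (FI x) 1 = tau x 2" "tau (FI x) 2 = tau x 0"
  "tau (FI x) 0 = (ar x 1 ^ 6 / (qr x ^ 4 * cr x ^ 4) * tau x 2 * taub x 0 + taub x 2 * tau x 0)
        / (ar x 1 ^ 3 / (qr x ^ 2 * cr x ^ 2) * taub x 1)"
  "taub (FI x) 1 = taub x 2" "taub (FI x) 2 = taub x 0"
  "taub (FI x) 0 = (qr x ^ 4 * cr x ^ 4 * ar x 1 ^ 6 * taub x 2 * tau x 0 + tau x 2 * taub x 0)
        / (qr x ^ 2 * cr x ^ 2 * ar x 1 ^ 3 * tau x 1)"
  by (simp_all add: FI_def sT_def piT_def A_def T_def TB_def uu_def uh_def vv_def vh_def)


lemma GG_simps:
  "qr (GG x) = qr x" "cr (GG x) = qr x ^ 2 * cr x" "ar (GG x) = ar x" "tau (GG x) = taub x"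
  by (simp_all add: GG_def w0T_def rT_def)

lemma uu_rT: "qr x \<noteq> 0 \<Longrightarrow> cr x \<noteq> 0 \<Longrightarrow> uu (rT x) j = qr x ^ 4 * cr x ^ 4 * A x j ^ 6"
  by (simp add: uu_def rT_def A_def power_mult_distrib power_divide field_simps)

lemma GG_taub:
  assumes "qr x \<noteq> 0" "cr x \<noteq> 0"
  shows "taub (GG x) 0 = ar x 1 ^ 2 * (tau x 0 * taub x 1 * taub x 2
       + qr x ^ 4 * cr x ^ 4 * ar x 2 ^ 6 * taub x 0 * tau x 1 * taub x 2
       + taub x 0 * taub x 1 * tau x 2 / (qr x ^ 4 * cr x ^ 4 * ar x 1 ^ 6))
       / (ar x 2 ^ 2 * tau x 1 * tau x 2)"
   "taub (GG x) 1 = ar x 2 ^ 2 * (tau x 1 * taub x 2 * taub x 0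
       + qr x ^ 4 * cr x ^ 4 * ar x 0 ^ 6 * taub x 1 * tau x 2 * taub x 0
       + taub x 1 * taub x 2 * tau x 0 / (qr x ^ 4 * cr x ^ 4 * ar x 2 ^ 6))
       / (ar x 0 ^ 2 * tau x 2 * tau x 0)"
   "taub (GG x) 2 = ar x 0 ^ 2 * (tau x 2 * taub x 0 * taub x 1
       + qr x ^ 4 * cr x ^ 4 * ar x 1 ^ 6 * taub x 2 * tau x 0 * taub x 1
       + taub x 2 * taub x 0 * tau x 1 / (qr x ^ 4 * cr x ^ 4 * ar x 0 ^ 6))
       / (ar x 1 ^ 2 * tau x 0 * tau x 1)"
  using assms unfolding GG_def w0T_def by (simp_all add: uu_rT del: times_divide_eq_right divide_divide_eq_right) (simp_all add: rT_def A_def T_def TB_def)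

lemma GI_simps:
  "qr (GI x) = qr x" "cr (GI x) = cr x / qr x ^ 2" "ar (GI x) = ar x" "taub (GI x) = tau x"
  by (simp_all add: GI_def w0T_def rT_def)

lemma GI_tau:
  assumes "qr x \<noteq> 0" "cr x \<noteq> 0"
  shows "tau (GI x) 0 = ar x 1 ^ 2 * (taub x 0 * tau x 1 * tau x 2
       + ar x 2 ^ 6 / (qr x ^ 4 * cr x ^ 4) * tau x 0 * taub x 1 * tau x 2
       + tau x 0 * tau x 1 * taub x 2 / (ar x 1 ^ 6 / (qr x ^ 4 * cr x ^ 4)))
       / (ar x 2 ^ 2 * taub x 1 * taub x 2)"
   "tau (GI x) 1 = ar x 2 ^ 2 * (taub x 1 * tau x 2 * tau x 0
       + ar x 0 ^ 6 / (qr x ^ 4 * cr x ^ 4) * tau x 1 * taub x 2 * tau x 0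
       + tau x 1 * tau x 2 * taub x 0 / (ar x 2 ^ 6 / (qr x ^ 4 * cr x ^ 4)))
       / (ar x 0 ^ 2 * taub x 2 * taub x 0)"
   "tau (GI x) 2 = ar x 0 ^ 2 * (taub x 2 * tau x 0 * tau x 1
       + ar x 1 ^ 6 / (qr x ^ 4 * cr x ^ 4) * tau x 2 * taub x 0 * tau x 1
       + tau x 2 * tau x 0 * taub x 1 / (ar x 0 ^ 6 / (qr x ^ 4 * cr x ^ 4)))
       / (ar x 1 ^ 2 * taub x 0 * taub x 1)"
  using assms by (simp_all add: GI_def w0T_def rT_def A_def T_def TB_def uu_def)


definition pos :: "complex \<Rightarrow> bool" where "pos z \<longleftrightarrow> (\<exists>r>0. z = complex_of_real r)"

lemma pos_add[intro]: "pos a \<Longrightarrow> pos b \<Longrightarrow> pos (a + b)"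
  unfolding pos_def by (metis add_pos_pos of_real_add)
lemma pos_mult[intro]: "pos a \<Longrightarrow> pos b \<Longrightarrow> pos (a * b)"
  unfolding pos_def by (metis mult_pos_pos of_real_mult)
lemma pos_div[intro]: "pos a \<Longrightarrow> pos b \<Longrightarrow> pos (a / b)"
  unfolding pos_def by (metis divide_pos_pos of_real_divide)
lemma pos_pow[intro]: "pos a \<Longrightarrow> pos (a ^ n)"
  unfolding pos_def by (metis zero_less_power of_real_power)
lemma pos_one[intro]: "pos 1"
  unfolding pos_def by (rule exI[of _ 1]) simp
lemma pos_numeral[intro]: "pos (numeral n)"
  unfolding pos_def by (rule exI[of _ "numeral n"]) simp
lemma pos_nz: "pos a \<Longrightarrow> a \<noteq> 0"
  unfolding pos_def by auto

lemma all3: "(\<forall>i<3. P (i::nat)) \<longleftrightarrow> P 0 \<and> P 1 \<and> P 2"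
proof -
  have "{i::nat. i < 3} = {0,1,2}" by auto
  then show ?thesis by (metis (mono_tags, lifting) empty_iff insert_iff mem_Collect_eq)
qed

definition Good :: "pt \<Rightarrow> bool" where
  "Good x \<longleftrightarrow> pos (qr x) \<and> pos (cr x) \<and> (\<forall>i<3. pos (ar x i) \<and> pos (tau x i) \<and> pos (taub x i))
      \<and> ar x 2 = qr x \<and> ar x 0 * ar x 1 = qr x"

definition eqv :: "pt \<Rightarrow> pt \<Rightarrow> bool" where
  "eqv x y \<longleftrightarrow> qr x = qr y \<and> cr x = cr y \<and> (\<forall>i<3. ar x i = ar y i \<and> tau x i = tau y i \<and> taub x i = taub y i)"

lemma GoodD:
  assumes "Good x"
  shows "pos (qr x)" "pos (cr x)" "pos (ar x 0)" "pos (ar x 1)" "pos (ar x 2)"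
    "pos (tau x 0)" "pos (tau x 1)" "pos (tau x 2)" "pos (taub x 0)" "pos (taub x 1)" "pos (taub x 2)"
    "ar x 2 = qr x" "ar x 0 * ar x 1 = qr x"
  using assms unfolding Good_def all3 by auto

lemma GoodI:
  assumes "pos (qr x)" "pos (cr x)" "pos (ar x 0)" "pos (ar x 1)" "pos (ar x 2)"
    "pos (tau x 0)" "pos (tau x 1)" "pos (tau x 2)" "pos (taub x 0)" "pos (taub x 1)" "pos (taub x 2)"
    "ar x 2 = qr x" "ar x 0 * ar x 1 = qr x"
  shows "Good x"
  using assms unfolding Good_def all3 by auto

lemmas posI = pos_add pos_mult pos_div pos_pow pos_one pos_numeral

lemma Good_FF: assumes "Good x" shows "Good (FF x)"
proof -
  note g = GoodD[OF assms]
  have "ar x 0 \<noteq> 0" using g pos_nz by auto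
  then show ?thesis using g
    by (intro GoodI) (simp_all add: FF_simps posI mult.commute)
qed

lemma Good_FI: assumes "Good x" shows "Good (FI x)"
proof -
  note g = GoodD[OF assms]
  have "ar x 1 \<noteq> 0" using g pos_nz by auto
  then show ?thesis using g
    by (intro GoodI) (simp_all add: FI_simps posI mult.commute)
qed

lemma Good_GG: assumes "Good x" shows "Good (GG x)"
proof -
  note g = GoodD[OF assms]
  have "qr x \<noteq> 0" "cr x \<noteq> 0" using g pos_nz by auto
  then show ?thesis using g
    by (intro GoodI) (simp_all add: GG_simps GG_taub posI)
qed

lemma Good_GI: assumes "Good x" shows "Good (GI x)"
proof -
  note g = GoodD[OF assms]
  have "qr x \<noteq> 0" "cr x \<noteq> 0" using g pos_nz by auto
  then show ?thesis using g
    by (intro GoodI) (simp_all add: GI_simps GI_tau posI)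
qed

lemma GoodNZ:
  assumes "Good x"
  shows "qr x \<noteq> 0" "cr x \<noteq> 0" "ar x 0 \<noteq> 0" "ar x 1 \<noteq> 0" "ar x 2 \<noteq> 0"
    "tau x 0 \<noteq> 0" "tau x 1 \<noteq> 0" "tau x 2 \<noteq> 0" "taub x 0 \<noteq> 0" "taub x 1 \<noteq> 0" "taub x 2 \<noteq> 0"
  using GoodD[OF assms] pos_nz by auto

lemma FF_FI: assumes "Good x" shows "eqv (FF (FI x)) x"
proof -
  note nz = GoodNZ[OF assms] GoodNZ[OF Good_FI[OF assms]]
  note g = GoodD[OF assms]
  show ?thesis unfolding eqv_def all3
    using g by (simp add: FF_simps FI_simps field_simps pos_nz posI)
qed

lemma FI_FF: assumes "Good x" shows "eqv (FI (FF x)) x"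
proof -
  note nz = GoodNZ[OF assms] GoodNZ[OF Good_FF[OF assms]]
  note g = GoodD[OF assms]
  show ?thesis unfolding eqv_def all3
    using g by (simp add: FF_simps FI_simps field_simps pos_nz posI)
qed


lemma Good_a1: "Good x \<Longrightarrow> ar x 1 = qr x / ar x 0"
  using GoodD[of x] GoodNZ[of x] by (simp add: field_simps)

lemma GoodF:
  assumes "Good x"
  shows "pos (qr x)" "pos (cr x)" "pos (ar x 0)"
    "pos (tau x 0)" "pos (tau x 1)" "pos (tau x 2)" "pos (taub x 0)" "pos (taub x 1)" "pos (taub x 2)"
    "ar x 2 = qr x" "ar x 1 = qr x / ar x 0"
  using GoodD[OF assms] Good_a1[OF assms] by auto

lemma GG_GI: assumes "Good x" shows "eqv (GG (GI x)) x"
proof -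
  have y: "Good (GI x)" using Good_GI[OF assms] .
  note nz = GoodNZ[OF assms]
  note tb = GG_taub[OF GoodNZ(1,2)[OF y]]
  have e0: "taub (GG (GI x)) 0 = taub x 0"
    unfolding tb GI_simps GI_tau[OF nz(1,2)] GoodF(10,11)[OF assms]
    using GoodF(1-9)[OF assms] apply (simp add: field_simps pos_nz posI) by algebra
  have e1: "taub (GG (GI x)) 1 = taub x 1"
    unfolding tb GI_simps GI_tau[OF nz(1,2)] GoodF(10,11)[OF assms]
    using GoodF(1-9)[OF assms] apply (simp add: field_simps pos_nz posI) by algebra
  have e2: "taub (GG (GI x)) 2 = taub x 2"
    unfolding tb GI_simps GI_tau[OF nz(1,2)] GoodF(10,11)[OF assms]
    using GoodF(1-9)[OF assms] apply (simp add: field_simps pos_nz posI) by algebra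
  then show ?thesis using e0 e1 e2 unfolding eqv_def all3 using nz by (simp add: GG_simps GI_simps)
qed

lemma GI_GG: assumes "Good x" shows "eqv (GI (GG x)) x"
proof -
  have y: "Good (GG x)" using Good_GG[OF assms] .
  note nz = GoodNZ[OF assms]
  note tb = GI_tau[OF GoodNZ(1,2)[OF y]]
  have e0: "tau (GI (GG x)) 0 = tau x 0"
    unfolding tb GG_simps GG_taub[OF nz(1,2)] GoodF(10,11)[OF assms]
    using GoodF(1-9)[OF assms] apply (simp add: field_simps pos_nz posI) by algebra
  have e1: "tau (GI (GG x)) 1 = tau x 1"
    unfolding tb GG_simps GG_taub[OF nz(1,2)] GoodF(10,11)[OF assms]
    using GoodF(1-9)[OF assms] apply (simp add: field_simps pos_nz posI) by algebra
  have e2: "tau (GI (GG x)) 2 = tau x 2"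
    unfolding tb GG_simps GG_taub[OF nz(1,2)] GoodF(10,11)[OF assms]
    using GoodF(1-9)[OF assms] apply (simp add: field_simps pos_nz posI) by algebra
  then show ?thesis using e0 e1 e2 unfolding eqv_def all3 using nz by (simp add: GG_simps GI_simps)
qed


lemma FF_GG: assumes "Good x" shows "eqv (FF (GG x)) (GG (FF x))"
proof -
  have y: "Good (FF x)" using Good_FF[OF assms] .
  have z: "Good (GG x)" using Good_GG[OF assms] .
  note nz = GoodNZ[OF assms]
  note tx = GG_taub[OF nz(1,2)]
  note ty = GG_taub[OF GoodNZ(1,2)[OF y]]
  note a = GoodF(10,11)[OF assms]
  note p = GoodF(1-9)[OF assms]
  have e0: "taub (FF (GG x)) 0 = taub (GG (FF x)) 0"
    unfolding ty FF_simps GG_simps tx a using p apply (simp add: field_simps pos_nz posI) by algebra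
  have e1: "taub (FF (GG x)) 1 = taub (GG (FF x)) 1"
    unfolding ty FF_simps GG_simps tx a using p apply (simp add: field_simps pos_nz posI) by algebra
  have e2: "taub (FF (GG x)) 2 = taub (GG (FF x)) 2"
    unfolding ty FF_simps GG_simps tx a using p apply (simp add: field_simps pos_nz posI) by algebra
  have f1: "tau (FF (GG x)) 1 = tau (GG (FF x)) 1"
    unfolding ty FF_simps GG_simps tx a using p apply (simp add: field_simps pos_nz posI) by algebra
  show ?thesis using e0 e1 e2 f1 unfolding eqv_def all3 by (simp add: GG_simps FF_simps)
qed

lemma eqv_refl[simp]: "eqv x x" unfolding eqv_def by simp
lemma eqv_sym: "eqv x y \<Longrightarrow> eqv y x" unfolding eqv_def by simp
lemma eqv_trans[trans]: "eqv x y \<Longrightarrow> eqv y z \<Longrightarrow> eqv x z" unfolding eqv_def by simp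

lemma eqv_A: "eqv x y \<Longrightarrow> A x i = A y i"
  unfolding eqv_def A_def by auto
lemma eqv_T: "eqv x y \<Longrightarrow> T x i = T y i"
  unfolding eqv_def T_def by auto
lemma eqv_TB: "eqv x y \<Longrightarrow> TB x i = TB y i"
  unfolding eqv_def TB_def by auto

lemma eqv_Good: "eqv x y \<Longrightarrow> Good x \<Longrightarrow> Good y"
  unfolding eqv_def Good_def by auto

lemma eqv_uu: "eqv x y \<Longrightarrow> uu x i = uu y i" "eqv x y \<Longrightarrow> uh x i = uh y i"
   "eqv x y \<Longrightarrow> vv x i = vv y i" "eqv x y \<Longrightarrow> vh x i = vh y i"
  unfolding uu_def uh_def vv_def vh_def using eqv_A[of x y i] by (auto simp: eqv_def)

lemma eqv_piT: "eqv x y \<Longrightarrow> piT x = piT y"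
  unfolding piT_def using eqv_A[of x y] eqv_T[of x y] eqv_TB[of x y] by (auto simp: eqv_def)

lemma eqv_sT: "eqv x y \<Longrightarrow> sT i x = sT i y"
  unfolding sT_def using eqv_A[of x y] eqv_T[of x y] eqv_TB[of x y] eqv_uu[of x y]
  by (auto simp: eqv_def)

lemma eqv_FF: "eqv x y \<Longrightarrow> eqv (FF x) (FF y)"
  unfolding FF_def using eqv_piT[of x y] by simp
lemma eqv_FI: "eqv x y \<Longrightarrow> eqv (FI x) (FI y)"
  unfolding FI_def using eqv_sT[of x y] by simp

lemma eqv_GG: "eqv x y \<Longrightarrow> eqv (GG x) (GG y)"
proof -
  assume e: "eqv x y"
  have e2: "eqv (rT x) (rT y)" using e unfolding eqv_def rT_def by simp
  show ?thesis unfolding GG_def w0T_def eqv_def using e2 eqv_A[OF e2] eqv_T[OF e2] eqv_TB[OF e2] eqv_uu[OF e2]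
    by (simp add: eqv_def)
qed

lemma eqv_GI: "eqv x y \<Longrightarrow> eqv (GI x) (GI y)"
proof -
  assume e: "eqv x y"
  have e2: "eqv (w0T x) (w0T y)" unfolding w0T_def eqv_def using e eqv_A[OF e] eqv_T[OF e] eqv_TB[OF e] eqv_uu[OF e]
    by (simp add: eqv_def)
  show ?thesis using e2 unfolding eqv_def GI_def rT_def by simp
qed

definition ipw :: "(pt \<Rightarrow> pt) \<Rightarrow> (pt \<Rightarrow> pt) \<Rightarrow> int \<Rightarrow> pt \<Rightarrow> pt" where
  "ipw f g k z = (if 0 \<le> k then (f ^^ nat k) z else (g ^^ nat (- k)) z)"

definition okmap :: "(pt \<Rightarrow> pt) \<Rightarrow> bool" where
  "okmap f \<longleftrightarrow> (\<forall>z. Good z \<longrightarrow> Good (f z)) \<and> (\<forall>z z'. eqv z z' \<longrightarrow> eqv (f z) (f z'))"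

definition okpair :: "(pt \<Rightarrow> pt) \<Rightarrow> (pt \<Rightarrow> pt) \<Rightarrow> bool" where
  "okpair f g \<longleftrightarrow> okmap f \<and> okmap g \<and> (\<forall>z. Good z \<longrightarrow> eqv (f (g z)) z \<and> eqv (g (f z)) z)"

lemma okmap_funpow: "okmap f \<Longrightarrow> okmap (f ^^ n)"
  unfolding okmap_def by (induction n) auto

lemma okmap_ipw: "okmap f \<Longrightarrow> okmap g \<Longrightarrow> okmap (ipw f g k)"
proof -
  assume "okmap f" "okmap g"
  then have "okmap (f ^^ nat k)" "okmap (g ^^ nat (-k))" by (auto intro: okmap_funpow)
  then show ?thesis unfolding okmap_def ipw_def by auto
qed

lemma ipw_succ:
  assumes p: "okpair f g" and z: "Good z"
  shows "eqv (ipw f g (k+1) z) (f (ipw f g k z))"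
proof (cases "0 \<le> k")
  case True
  then have "nat (k+1) = Suc (nat k)" by simp
  then show ?thesis using True by (simp add: ipw_def)
next
  case False
  have og: "okmap g" using p unfolding okpair_def by auto
  have gw: "Good ((g ^^ nat (-k-1)) z)" using okmap_funpow[OF og] z unfolding okmap_def by auto
  have n: "nat (-k) = Suc (nat (-k-1))" using False by simp
  have "ipw f g (k+1) z = (g ^^ nat (-k-1)) z"
    using False by (cases "k = -1") (auto simp: ipw_def)
  moreover have "ipw f g k z = g ((g ^^ nat (-k-1)) z)" using False n by (simp add: ipw_def)
  ultimately show ?thesis using p gw unfolding okpair_def by (auto intro: eqv_sym)
qed

lemma ipw_pred:
  assumes p: "okpair f g" and z: "Good z"
  shows "eqv (ipw f g (k-1) z) (g (ipw f g k z))"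
proof (cases "0 < k")
  case False
  then have "nat (-(k-1)) = Suc (nat (-k))" by simp
  then show ?thesis using False by (auto simp: ipw_def)
next
  case True
  have og: "okmap f" using p unfolding okpair_def by auto
  have gw: "Good ((f ^^ nat (k-1)) z)" using okmap_funpow[OF og] z unfolding okmap_def by auto
  have n: "nat k = Suc (nat (k-1))" using True by simp
  have "ipw f g (k-1) z = (f ^^ nat (k-1)) z"
    using True by (simp add: ipw_def)
  moreover have "ipw f g k z = f ((f ^^ nat (k-1)) z)" using True n by (simp add: ipw_def)
  ultimately show ?thesis using p gw unfolding okpair_def by (auto intro: eqv_sym)
qed

lemma ipw_zero[simp]: "ipw f g 0 z = z" by (simp add: ipw_def)

lemma ipw_add:
  assumes p: "okpair f g" and z: "Good z"
  shows "eqv (ipw f g a (ipw f g b z)) (ipw f g (a+b) z)"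
proof (induction a rule: int_induct[where k = 0])
  case base then show ?case by simp
next
  case (step1 i)
  have of: "okmap f" "okmap g" using p unfolding okpair_def by auto
  have w: "Good (ipw f g b z)" "Good (ipw f g (i+b) z)" using okmap_ipw[OF of] z unfolding okmap_def by auto
  have "eqv (ipw f g (i+1) (ipw f g b z)) (f (ipw f g i (ipw f g b z)))" using ipw_succ[OF p w(1)] .
  also have "eqv (f (ipw f g i (ipw f g b z))) (f (ipw f g (i+b) z))" using step1 of unfolding okmap_def by auto
  also have "eqv (f (ipw f g (i+b) z)) (ipw f g (i+b+1) z)" using ipw_succ[OF p z] by (rule eqv_sym)
  finally show ?case by (simp add: algebra_simps)
next
  case (step2 i)
  have of: "okmap f" "okmap g" using p unfolding okpair_def by auto
  have w: "Good (ipw f g b z)" "Good (ipw f g (i+b) z)" using okmap_ipw[OF of] z unfolding okmap_def by auto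
  have "eqv (ipw f g (i-1) (ipw f g b z)) (g (ipw f g i (ipw f g b z)))" using ipw_pred[OF p w(1)] .
  also have "eqv (g (ipw f g i (ipw f g b z))) (g (ipw f g (i+b) z))" using step2 of unfolding okmap_def by auto
  also have "eqv (g (ipw f g (i+b) z)) (ipw f g (i+b-1) z)" using ipw_pred[OF p z] by (rule eqv_sym)
  finally show ?case by (simp add: algebra_simps)
qed

lemma comm_inv:
  assumes p: "okpair f g" and h: "okmap h"
    and c: "\<And>z. Good z \<Longrightarrow> eqv (f (h z)) (h (f z))" and z: "Good z"
  shows "eqv (g (h z)) (h (g z))"
proof -
  have of: "okmap f" "okmap g" using p unfolding okpair_def by auto
  define w where "w = g z"
  have w: "Good w" using of z unfolding okmap_def w_def by auto
  have hw: "Good (h w)" using h w unfolding okmap_def by auto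
  have "eqv z (f w)" using p z unfolding okpair_def w_def by (auto intro: eqv_sym)
  then have "eqv (h z) (h (f w))" using h unfolding okmap_def by auto
  then have "eqv (g (h z)) (g (h (f w)))" using of unfolding okmap_def by auto
  also have "eqv (g (h (f w))) (g (f (h w)))" using c[OF w] of unfolding okmap_def by (auto intro: eqv_sym)
  also have "eqv (g (f (h w))) (h w)" using p hw unfolding okpair_def by auto
  finally show ?thesis unfolding w_def .
qed

lemma comm_ipw:
  assumes p: "okpair f g" and h: "okmap h"
    and c1: "\<And>z. Good z \<Longrightarrow> eqv (f (h z)) (h (f z))"
    and c2: "\<And>z. Good z \<Longrightarrow> eqv (g (h z)) (h (g z))" and z: "Good z"
  shows "eqv (h (ipw f g k z)) (ipw f g k (h z))"
proof (induction k rule: int_induct[where k = 0])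
  case base then show ?case by simp
next
  case (step1 i)
  have of: "okmap f" "okmap g" using p unfolding okpair_def by auto
  have w: "Good (ipw f g i z)" "Good (h z)" using okmap_ipw[OF of] z h unfolding okmap_def by auto
  have "eqv (h (ipw f g (i+1) z)) (h (f (ipw f g i z)))" using ipw_succ[OF p z] h unfolding okmap_def by auto
  also have "eqv (h (f (ipw f g i z))) (f (h (ipw f g i z)))" using c1[OF w(1)] by (rule eqv_sym)
  also have "eqv (f (h (ipw f g i z))) (f (ipw f g i (h z)))" using step1 of unfolding okmap_def by auto
  also have "eqv (f (ipw f g i (h z))) (ipw f g (i+1) (h z))" using ipw_succ[OF p w(2)] by (rule eqv_sym)
  finally show ?case .
next
  case (step2 i)
  have of: "okmap f" "okmap g" using p unfolding okpair_def by auto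
  have w: "Good (ipw f g i z)" "Good (h z)" using okmap_ipw[OF of] z h unfolding okmap_def by auto
  have "eqv (h (ipw f g (i-1) z)) (h (g (ipw f g i z)))" using ipw_pred[OF p z] h unfolding okmap_def by auto
  also have "eqv (h (g (ipw f g i z))) (g (h (ipw f g i z)))" using c2[OF w(1)] by (rule eqv_sym)
  also have "eqv (g (h (ipw f g i z))) (g (ipw f g i (h z)))" using step2 of unfolding okmap_def by auto
  also have "eqv (g (ipw f g i (h z))) (ipw f g (i-1) (h z))" using ipw_pred[OF p w(2)] by (rule eqv_sym)
  finally show ?case .
qed

lemma ok_FF: "okmap FF" unfolding okmap_def using Good_FF eqv_FF by auto
lemma ok_FI: "okmap FI" unfolding okmap_def using Good_FI eqv_FI by auto
lemma ok_GG: "okmap GG" unfolding okmap_def using Good_GG eqv_GG by auto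
lemma ok_GI: "okmap GI" unfolding okmap_def using Good_GI eqv_GI by auto

lemma okF: "okpair FF FI" unfolding okpair_def using ok_FF ok_FI FF_FI FI_FF by auto
lemma okG: "okpair GG GI" unfolding okpair_def using ok_GG ok_GI GG_GI GI_GG by auto

abbreviation "PF \<equiv> ipw FF FI"
abbreviation "PG \<equiv> ipw GG GI"

lemma c_GI_FF: "Good z \<Longrightarrow> eqv (GI (FF z)) (FF (GI z))"
  by (rule comm_inv[OF okG ok_FF]) (simp_all add: eqv_sym[OF FF_GG])
lemma c_FI_GG: "Good z \<Longrightarrow> eqv (FI (GG z)) (GG (FI z))"
  by (rule comm_inv[OF okF ok_GG]) (simp_all add: FF_GG)
lemma c_FI_GI: "Good z \<Longrightarrow> eqv (FI (GI z)) (GI (FI z))"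
  by (rule comm_inv[OF okF ok_GI]) (simp_all add: eqv_sym[OF c_GI_FF])

lemma c_GG_PF: "Good z \<Longrightarrow> eqv (GG (PF k z)) (PF k (GG z))"
  by (rule comm_ipw[OF okF ok_GG]) (simp_all add: FF_GG c_FI_GG)
lemma c_GI_PF: "Good z \<Longrightarrow> eqv (GI (PF k z)) (PF k (GI z))"
  by (rule comm_ipw[OF okF ok_GI]) (simp_all add: eqv_sym[OF c_GI_FF] c_FI_GI)

lemma c_PF_PG: "Good z \<Longrightarrow> eqv (PF k (PG n z)) (PG n (PF k z))"
  by (rule comm_ipw[OF okG okmap_ipw[OF ok_FF ok_FI]]) (simp_all add: c_GG_PF c_GI_PF)

definition Y :: "pt \<Rightarrow> int \<Rightarrow> int \<Rightarrow> pt" where "Y z j M = PG M (PF j z)"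

lemma Good_PF: "Good z \<Longrightarrow> Good (PF k z)" using okmap_ipw[OF ok_FF ok_FI] unfolding okmap_def by auto
lemma Good_PG: "Good z \<Longrightarrow> Good (PG k z)" using okmap_ipw[OF ok_GG ok_GI] unfolding okmap_def by auto
lemma Good_Y: "Good z \<Longrightarrow> Good (Y z j M)" unfolding Y_def using Good_PF Good_PG by auto

lemma Y_shift:
  assumes x: "Good x"
  shows "eqv (Y (Y x k N) j M) (Y x (k+j) (N+M))"
proof -
  have g: "Good (PF k x)" using Good_PF[OF x] .
  have "eqv (PG M (PF j (PG N (PF k x)))) (PG M (PG N (PF j (PF k x))))"
    using c_PF_PG[OF g] okmap_ipw[OF ok_GG ok_GI] unfolding okmap_def by auto
  also have "eqv \<dots> (PG (M+N) (PF j (PF k x)))"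
    using ipw_add[OF okG Good_PF[OF g]] .
  also have "eqv \<dots> (PG (M+N) (PF (j+k) x))"
    using ipw_add[OF okF x] okmap_ipw[OF ok_GG ok_GI] unfolding okmap_def by auto
  finally show ?thesis unfolding Y_def by (simp add: algebra_simps)
qed

lemma ipw_small:
  "ipw f g 1 z = f z" "ipw f g 2 z = f (f z)" "ipw f g (-1) z = g z" "ipw f g (-2) z = g (g z)"
  by (simp_all add: ipw_def numeral_2_eq_2)

lemma loc1:
  assumes "Good y"
  shows "qr y ^ 2 * cr y ^ 2 / ar y 0 ^ 3 * tau (Y y 1 0) 1 * tau (Y y (-2) 1) 1
       - qr y ^ 4 * cr y ^ 4 / ar y 0 ^ 6 * tau (Y y (-1) 0) 1 * tau (Y y 0 1) 1
       - tau (Y y (-1) 1) 1 * tau (Y y 0 0) 1 = 0"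
  unfolding Y_def ipw_small ipw_zero GG_simps FI_simps FF_simps GoodF(10,11)[OF assms]
  using GoodF(1-9)[OF assms] by (simp add: field_simps pos_nz posI)

lemma loc2:
  assumes "Good y"
  shows "1 / (qr y ^ 2 * cr y ^ 2 * ar y 0 ^ 3) * tau (Y y 1 1) 1 * tau (Y y (-2) 0) 1
       - 1 / (qr y ^ 4 * cr y ^ 4 * ar y 0 ^ 6) * tau (Y y 0 0) 1 * tau (Y y (-1) 1) 1
       - tau (Y y 0 1) 1 * tau (Y y (-1) 0) 1 = 0"
  unfolding Y_def ipw_small ipw_zero GG_simps FI_simps FF_simps GoodF(10,11)[OF assms]
  using GoodF(1-9)[OF assms] by (simp add: field_simps pos_nz posI)

lemma loc3:
  assumes "Good y"
  shows "tau (Y y 0 1) 1 * tau (Y y 1 (-1)) 1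
       - qr y * ar y 0 / cr y ^ 2 * tau (Y y 2 0) 1 * tau (Y y (-1) 0) 1
       - cr y ^ 4 / (qr y ^ 2 * ar y 0 ^ 2) * tau (Y y 0 0) 1 * tau (Y y 1 0) 1 = 0"
proof -
  have g: "Good (FF y)" using Good_FF[OF assms] .
  show ?thesis
  unfolding Y_def ipw_small ipw_zero GG_simps FI_simps GI_tau[OF GoodNZ(1,2)[OF g]] FF_simps GoodF(10,11)[OF assms]
  using GoodF(1-9)[OF assms] apply (simp add: field_simps pos_nz posI)
  by algebra
qed

lemma qr_funpow: fixes f :: "pt \<Rightarrow> pt" assumes "\<And>w. qr (f w) = qr w" shows "qr ((f ^^ n) z) = qr z"
  by (induction n) (simp_all add: assms)

lemma qr_PF: "qr (PF k z) = qr z"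
  unfolding ipw_def by (auto intro!: qr_funpow simp: FF_simps FI_simps)
lemma qr_PG: "qr (PG k z) = qr z"
  unfolding ipw_def by (auto intro!: qr_funpow simp: GG_simps GI_simps)

lemma cr_PF: "cr (PF k z) = cr z"
proof -
  have "\<And>n. cr ((FF ^^ n) z) = cr z" "\<And>n. cr ((FI ^^ n) z) = cr z"
    by (induct_tac n, simp_all add: FF_simps FI_simps)+
  then show ?thesis unfolding ipw_def by auto
qed

lemma ar_PG: "ar (PG k z) = ar z"
proof -
  have "\<And>n. ar ((GG ^^ n) z) = ar z" "\<And>n. ar ((GI ^^ n) z) = ar z"
    by (induct_tac n, simp_all add: GG_simps GI_simps)+
  then show ?thesis unfolding ipw_def by auto
qed

lemma cr_PG: "Good z \<Longrightarrow> cr (PG k z) = qr z powi (2*k) * cr z"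
proof -
  assume g: "Good z"
  have q: "qr z \<noteq> 0" using GoodNZ[OF g] by auto
  have a: "\<And>n. cr ((GG ^^ n) z) = qr z ^ (2*n) * cr z"
  proof -
    fix n show "cr ((GG ^^ n) z) = qr z ^ (2*n) * cr z"
      by (induction n) (simp_all add: GG_simps qr_funpow power_add power_mult power2_eq_square)
  qed
  have b: "\<And>n. cr ((GI ^^ n) z) = cr z / qr z ^ (2*n)"
  proof -
    fix n show "cr ((GI ^^ n) z) = cr z / qr z ^ (2*n)"
      by (induction n) (simp_all add: GI_simps qr_funpow power_add power_mult field_simps power2_eq_square)
  qed
  show ?thesis
  proof (cases "0 \<le> k")
    case True
    then have "qr z powi (2*k) = qr z ^ (2 * nat k)"
      by (simp add: power_int_nonneg_exp nat_mult_distrib)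
    then show ?thesis using True a by (simp add: ipw_def)
  next
    case False
    then have "qr z powi (2*k) = 1 / qr z ^ (2 * nat (-k))"
    proof -
      have "nat (-(2*k)) = 2 * nat (-k)" using False by simp
      then show ?thesis
      using False power_int_minus_divide[of "qr z" "2 * (-k)"] by (simp add: power_int_nonneg_exp)
    qed
    then show ?thesis using False b by (simp add: ipw_def)
  qed
qed

lemma ar_PF: "Good z \<Longrightarrow> ar (PF k z) 0 = qr z powi k * ar z 0"
proof -
  assume g: "Good z"
  have q: "qr z \<noteq> 0" using GoodNZ[OF g] by auto
  have a: "\<And>n. ar ((FF ^^ n) z) 0 = qr z ^ n * ar z 0"
  proof -
    fix n show "ar ((FF ^^ n) z) 0 = qr z ^ n * ar z 0"
    proof (induction n)
      case (Suc n)
      have "Good ((FF ^^ n) z)" using okmap_funpow[OF ok_FF] g unfolding okmap_def by auto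
      then show ?case using Suc GoodD(12)[of "(FF ^^ n) z"] qr_funpow[of FF, OF FF_simps(1)]
        by (simp add: FF_simps)
    qed simp
  qed
  have b: "\<And>n. ar ((FI ^^ n) z) 0 = ar z 0 / qr z ^ n"
  proof -
    fix n show "ar ((FI ^^ n) z) 0 = ar z 0 / qr z ^ n"
    proof (induction n)
      case (Suc n)
      have "Good ((FI ^^ n) z)" using okmap_funpow[OF ok_FI] g unfolding okmap_def by auto
      then have e: "ar ((FI ^^ n) z) 1 * ar ((FI ^^ n) z) 0 = qr z" "ar ((FI ^^ n) z) 1 \<noteq> 0"
        using GoodD(13)[of "(FI ^^ n) z"] qr_funpow[of FI, OF FI_simps(1)] GoodNZ[of "(FI ^^ n) z"] by (auto simp: mult.commute)
      have "ar ((FI ^^ Suc n) z) 0 = 1 / ar ((FI ^^ n) z) 1" by (simp add: FI_simps)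
      also have "\<dots> = ar ((FI ^^ n) z) 0 / qr z" using e q by (simp add: field_simps)
      also have "\<dots> = ar z 0 / qr z ^ Suc n" using Suc q by simp
      finally show ?case .
    qed simp
  qed
  show ?thesis
  proof (cases "0 \<le> k")
    case True
    then show ?thesis using a by (simp add: ipw_def power_int_nonneg_exp)
  next
    case False
    then have "qr z powi k = 1 / qr z ^ (nat (-k))"
      using power_int_minus_divide[of "qr z" "(-k)"] by (simp add: power_int_nonneg_exp)
    then show ?thesis using False b by (simp add: ipw_def)
  qed
qed

lemma s_map_eq: "s_map i x = (if qr x \<noteq> 0 \<and> cr x \<noteq> 0 \<and> A x i \<noteq> 0 \<and> T x i \<noteq> 0 \<and> TB x i \<noteq> 0 then Some (sT i x) else None)"
  by (simp add: s_map_def sT_def)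
lemma pi_map_eq: "pi_map x = Some (piT x)"
  by (simp add: pi_map_def piT_def)
lemma w0_map_eq: "w0_map x = (if qr x \<noteq> 0 \<and> cr x \<noteq> 0 \<and> (\<forall>i<3. A x i \<noteq> 0 \<and> TB x i \<noteq> 0) then Some (w0T x) else None)"
  by (simp add: w0_map_def w0T_def)
lemma r_map_eq: "r_map x = (if qr x \<noteq> 0 \<and> cr x \<noteq> 0 then Some (rT x) else None)"
  by (simp add: r_map_def rT_def)

lemma R1_Good: "Good z \<Longrightarrow> R1_map z = Some (FF z)"
  using GoodNZ[of z] by (simp add: R1_map_def pi_map_eq s_map_eq FF_def piT_def A_def T_def TB_def)
lemma R1inv_Good: "Good z \<Longrightarrow> R1inv_map z = Some (FI z)"
  using GoodNZ[of z] by (simp add: R1inv_map_def pi_map_eq s_map_eq FI_def A_def T_def TB_def)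
lemma T4_Good: "Good z \<Longrightarrow> T4_map z = Some (GG z)"
  using GoodNZ[of z] by (simp add: T4_map_def r_map_eq w0_map_eq GG_def rT_def A_def T_def TB_def all3)
lemma T4inv_Good: "Good z \<Longrightarrow> T4inv_map z = Some (GI z)"
  using GoodNZ[of z] by (simp add: T4inv_map_def r_map_eq w0_map_eq GI_def A_def T_def TB_def all3 w0T_def)

lemma word_rep:
  assumes "\<And>w. Good w \<Longrightarrow> f w = Some (F w)" and "okmap F" and "Good z"
  shows "word_map (replicate n f) z = Some ((F ^^ n) z)"
  using assms(3)
proof (induction n arbitrary: z)
  case (Suc n)
  have "Good (F z)" using assms(2) Suc.prems unfolding okmap_def by auto
  then show ?case using Suc assms(1) by (simp add: funpow_Suc_right funpow_swap1)
qed simp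

lemma ipow_R1: "Good z \<Longrightarrow> ipow_map R1_map R1inv_map k z = Some (PF k z)"
  unfolding ipow_map_def ipw_def
  using word_rep[of R1_map FF, OF R1_Good ok_FF] word_rep[of R1inv_map FI, OF R1inv_Good ok_FI] by auto
lemma ipow_T4: "Good z \<Longrightarrow> ipow_map T4_map T4inv_map k z = Some (PG k z)"
  unfolding ipow_map_def ipw_def
  using word_rep[of T4_map GG, OF T4_Good ok_GG] word_rep[of T4inv_map GI, OF T4inv_Good ok_GI] by auto

lemma tauKN_Good: "Good x \<Longrightarrow> tauKN j M x = Some (tau (Y x j M) 1)"
  unfolding tauKN_def using ipow_R1[of x j] ipow_T4[OF Good_PF[of x j]]
  by (simp add: Y_def T_def)

lemma lin_pow: "(q::complex) \<noteq> 0 \<Longrightarrow> q powi (a*k + b*N + c) = (q powi k) powi a * (q powi N) powi b * q powi c"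
proof -
  assume q: "q \<noteq> 0"
  have "q powi (a*k) = (q powi k) powi a" "q powi (b*N) = (q powi N) powi b"
    by (metis mult.commute power_int_mult)+
  then show ?thesis using q by (simp add: power_int_add)
qed

lemma core:
  fixes x :: pt and k N :: int
  assumes G: "Good x"
  shows
   "(let \<tau> = (\<lambda>j M. the (tauKN j M x)); Q = qr x ^ 2; \<gamma> = cr x; \<alpha>\<^sub>0 = ar x 0 in
      qr x powi (-3*k+4*N+2) * \<gamma>^2 * \<alpha>\<^sub>0 powi (-3) * \<tau> (k+1) N * \<tau> (k-2) (N+1)
        - Q powi (-3*k+4*N+2) * \<gamma>^4 * \<alpha>\<^sub>0 powi (-6) * \<tau> (k-1) N * \<tau> k (N+1)
        - \<tau> (k-1) (N+1) * \<tau> k N = 0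
    \<and> qr x powi (-3*k-4*N-2) * \<gamma> powi (-2) * \<alpha>\<^sub>0 powi (-3) * \<tau> (k+1) (N+1) * \<tau> (k-2) N
        - Q powi (-3*k-4*N-2) * \<gamma> powi (-4) * \<alpha>\<^sub>0 powi (-6) * \<tau> k N * \<tau> (k-1) (N+1)
        - \<tau> k (N+1) * \<tau> (k-1) N = 0
    \<and> \<tau> k (N+1) * \<tau> (k+1) (N-1)
        - qr x powi (k-4*N+1) * \<gamma> powi (-2) * \<alpha>\<^sub>0 * \<tau> (k+2) N * \<tau> (k-1) N
        - Q powi (-k+4*N-1) * \<gamma>^4 * \<alpha>\<^sub>0 powi (-2) * \<tau> k N * \<tau> (k+1) N = 0)"
proof -
  define y where "y = Y x k N"
  have Gy: "Good y" unfolding y_def using Good_Y[OF G] .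
  have sh: "tau (Y x (k+a) (N+b)) 1 = tau (Y y a b) 1" for a b
    using Y_shift[OF G, of k N a b] unfolding y_def eqv_def by simp
  have tK: "the (tauKN j M x) = tau (Y x j M) 1" for j M
    using tauKN_Good[OF G] by simp
  define q where "q = qr x"
  define P where "P = q powi k"
  define R where "R = q powi N"
  define \<gamma> where "\<gamma> = cr x"
  define \<alpha> where "\<alpha> = ar x 0"
  have q0: "q \<noteq> 0" using GoodNZ[OF G] unfolding q_def by auto
  have g0: "\<gamma> \<noteq> 0" using GoodNZ[OF G] unfolding \<gamma>_def by auto
  have a0: "\<alpha> \<noteq> 0" using GoodNZ[OF G] unfolding \<alpha>_def by auto
  have P0: "P \<noteq> 0" "R \<noteq> 0" using q0 unfolding P_def R_def by auto
  have pars: "qr y = q" "cr y = R^2 * \<gamma>" "ar y 0 = P * \<alpha>"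
    unfolding y_def Y_def q_def R_def \<gamma>_def P_def \<alpha>_def
    using cr_PG[OF Good_PF[OF G], of N k] ar_PF[OF G, of k]
    by (simp_all add: qr_PG qr_PF cr_PF ar_PG power_int_power' mult.commute)
  have Q: "(q^2) powi m = (q powi m)^2" for m
    by (simp add: power_int_mult_distrib power2_eq_square)
  have L1: "q powi (-3*k+4*N+2) = q^2 * R^4 / P^3"
    using lin_pow[OF q0, of "-3" k 4 N 2] P0 q0 unfolding P_def[symmetric] R_def[symmetric]
    by (simp add: power_int_minus field_simps)
  have ex: "-3*k-4*N-2 = -3*k + (-4)*N + (-2)" by simp
  have L2: "q powi (-3*k-4*N-2) = 1 / (q^2 * R^4 * P^3)"
    unfolding ex lin_pow[OF q0] P_def[symmetric] R_def[symmetric] using P0 q0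
    by (simp add: power_int_minus field_simps)
  have L3: "q powi (k-4*N+1) = q * P / R^4"
    using lin_pow[OF q0, of 1 k "-4" N 1] P0 q0 unfolding P_def[symmetric] R_def[symmetric]
    by (simp add: power_int_minus field_simps)
  have L4: "q powi (-k+4*N-1) = R^4 / (q * P)"
    using lin_pow[OF q0, of "-1" k 4 N "-1"] P0 q0 unfolding P_def[symmetric] R_def[symmetric]
    by (simp add: power_int_minus field_simps)
  note L = L1 L2 L3 L4
  have c1: "q powi (-3*k+4*N+2) * \<gamma>^2 * \<alpha> powi (-3) = q ^ 2 * (R^2 * \<gamma>) ^ 2 / (P * \<alpha>) ^ 3"
    unfolding L using P0 q0 a0 by (simp add: power_int_minus field_simps)
  have c2: "(q^2) powi (-3*k+4*N+2) * \<gamma>^4 * \<alpha> powi (-6) = q ^ 4 * (R^2 * \<gamma>) ^ 4 / (P * \<alpha>) ^ 6"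
    unfolding Q L using P0 q0 a0 by (simp add: power_int_minus field_simps)
  have c3: "q powi (-3*k-4*N-2) * \<gamma> powi (-2) * \<alpha> powi (-3) = 1 / (q ^ 2 * (R^2 * \<gamma>) ^ 2 * (P * \<alpha>) ^ 3)"
    unfolding L using P0 q0 a0 g0 by (simp add: power_int_minus field_simps)
  have c4: "(q^2) powi (-3*k-4*N-2) * \<gamma> powi (-4) * \<alpha> powi (-6) = 1 / (q ^ 4 * (R^2 * \<gamma>) ^ 4 * (P * \<alpha>) ^ 6)"
    unfolding Q L using P0 q0 a0 g0 by (simp add: power_int_minus field_simps)
  have c5: "q powi (k-4*N+1) * \<gamma> powi (-2) * \<alpha> = q * (P * \<alpha>) / (R^2 * \<gamma>) ^ 2"
    unfolding L using P0 q0 a0 g0 by (simp add: power_int_minus field_simps)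
  have c6: "(q^2) powi (-k+4*N-1) * \<gamma>^4 * \<alpha> powi (-2) = (R^2 * \<gamma>) ^ 4 / (q ^ 2 * (P * \<alpha>) ^ 2)"
    unfolding Q L using P0 q0 a0 g0 by (simp add: power_int_minus field_simps)
  have t: "tau (Y x (k+1) N) 1 = tau (Y y 1 0) 1" "tau (Y x (k-2) (N+1)) 1 = tau (Y y (-2) 1) 1"
    "tau (Y x (k-1) N) 1 = tau (Y y (-1) 0) 1" "tau (Y x k (N+1)) 1 = tau (Y y 0 1) 1"
    "tau (Y x (k-1) (N+1)) 1 = tau (Y y (-1) 1) 1" "tau (Y x k N) 1 = tau (Y y 0 0) 1"
    "tau (Y x (k+1) (N+1)) 1 = tau (Y y 1 1) 1" "tau (Y x (k-2) N) 1 = tau (Y y (-2) 0) 1"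
    "tau (Y x (k+1) (N-1)) 1 = tau (Y y 1 (-1)) 1" "tau (Y x (k+2) N) 1 = tau (Y y 2 0) 1"
    using sh[of 1 0] sh[of "-2" 1] sh[of "-1" 0] sh[of 0 1] sh[of "-1" 1] sh[of 0 0] sh[of 1 1]
      sh[of "-2" 0] sh[of 1 "-1"] sh[of 2 0] by simp_all
  show ?thesis
    unfolding Let_def tK t q_def[symmetric] \<gamma>_def[symmetric] \<alpha>_def[symmetric] c1 c2 c3 c4 c5 c6
    using loc1[OF Gy, unfolded pars] loc2[OF Gy, unfolded pars] loc3[OF Gy, unfolded pars]
    by simp
qed

definition RatOn :: "complex set \<Rightarrow> (complex \<Rightarrow> complex) \<Rightarrow> bool" where
  "RatOn S f \<longleftrightarrow> (\<exists>p q. \<forall>t\<in>S. poly q t \<noteq> 0 \<and> f t = poly p t / poly q t)"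

lemma RatOn_const[intro]: "RatOn S (\<lambda>t. c)"
  unfolding RatOn_def by (rule exI[of _ "[:c:]"], rule exI[of _ 1]) simp

lemma RatOn_id[intro]: "RatOn S (\<lambda>t. t)"
  unfolding RatOn_def by (rule exI[of _ "[:0,1:]"], rule exI[of _ 1]) simp

lemma RatOn_add[intro]: "RatOn S f \<Longrightarrow> RatOn S g \<Longrightarrow> RatOn S (\<lambda>t. f t + g t)"
  unfolding RatOn_def
proof (elim exE)
  fix p1 q1 p2 q2
  assume 1: "\<forall>t\<in>S. poly q1 t \<noteq> 0 \<and> f t = poly p1 t / poly q1 t"
     and 2: "\<forall>t\<in>S. poly q2 t \<noteq> 0 \<and> g t = poly p2 t / poly q2 t"
  show "\<exists>p q. \<forall>t\<in>S. poly q t \<noteq> 0 \<and> f t + g t = poly p t / poly q t"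
    by (rule exI[of _ "p1 * q2 + p2 * q1"], rule exI[of _ "q1 * q2"]) (use 1 2 in \<open>simp add: field_simps\<close>)
qed

lemma RatOn_mult[intro]: "RatOn S f \<Longrightarrow> RatOn S g \<Longrightarrow> RatOn S (\<lambda>t. f t * g t)"
  unfolding RatOn_def
proof (elim exE)
  fix p1 q1 p2 q2
  assume 1: "\<forall>t\<in>S. poly q1 t \<noteq> 0 \<and> f t = poly p1 t / poly q1 t"
     and 2: "\<forall>t\<in>S. poly q2 t \<noteq> 0 \<and> g t = poly p2 t / poly q2 t"
  show "\<exists>p q. \<forall>t\<in>S. poly q t \<noteq> 0 \<and> f t * g t = poly p t / poly q t"
    by (rule exI[of _ "p1 * p2"], rule exI[of _ "q1 * q2"]) (use 1 2 in \<open>simp add: field_simps\<close>)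
qed

lemma RatOn_uminus[intro]: "RatOn S f \<Longrightarrow> RatOn S (\<lambda>t. - f t)"
proof -
  assume "RatOn S f"
  then have "RatOn S (\<lambda>t. (-1) * f t)" by (intro RatOn_mult RatOn_const)
  then show ?thesis by simp
qed

lemma RatOn_diff[intro]: "RatOn S f \<Longrightarrow> RatOn S g \<Longrightarrow> RatOn S (\<lambda>t. f t - g t)"
proof -
  assume "RatOn S f" "RatOn S g"
  then have "RatOn S (\<lambda>t. f t + - g t)" by (intro RatOn_add RatOn_uminus)
  then show ?thesis by simp
qed

lemma RatOn_divide:
  assumes "RatOn S f" "RatOn S g" "\<And>t. t \<in> S \<Longrightarrow> g t \<noteq> 0"
  shows "RatOn S (\<lambda>t. f t / g t)"
  using assms(1,2) unfolding RatOn_def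
proof (elim exE)
  fix p1 q1 p2 q2
  assume 1: "\<forall>t\<in>S. poly q1 t \<noteq> 0 \<and> f t = poly p1 t / poly q1 t"
     and 2: "\<forall>t\<in>S. poly q2 t \<noteq> 0 \<and> g t = poly p2 t / poly q2 t"
  have 3: "\<forall>t\<in>S. poly p2 t \<noteq> 0" using 2 assms(3) by fastforce
  show "\<exists>p q. \<forall>t\<in>S. poly q t \<noteq> 0 \<and> f t / g t = poly p t / poly q t"
    by (rule exI[of _ "p1 * q2"], rule exI[of _ "q1 * p2"]) (use 1 2 3 in \<open>simp add: field_simps\<close>)
qed

lemma RatOn_power[intro]: "RatOn S f \<Longrightarrow> RatOn S (\<lambda>t. f t ^ n)"
  by (induction n) auto

lemma RatOn_powi:
  assumes "RatOn S f" "\<And>t. t \<in> S \<Longrightarrow> f t \<noteq> 0"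
  shows "RatOn S (\<lambda>t. f t powi n)"
proof (cases "0 \<le> n")
  case True
  then show ?thesis using assms by (simp add: power_int_nonneg_exp RatOn_power)
next
  case False
  have "RatOn S (\<lambda>t. 1 / f t ^ nat (-n))"
    using assms by (intro RatOn_divide) auto
  moreover have "f t powi n = 1 / f t ^ nat (-n)" for t
    using False power_int_minus_divide[of "f t" "-n"] by (simp add: power_int_nonneg_exp)
  ultimately show ?thesis by simp
qed

lemma RatOn_mono: "RatOn S f \<Longrightarrow> S' \<subseteq> S \<Longrightarrow> RatOn S' f"
  unfolding RatOn_def by blast

lemma RatOn_cong: "RatOn S f \<Longrightarrow> (\<And>t. t \<in> S \<Longrightarrow> f t = g t) \<Longrightarrow> RatOn S g"
  unfolding RatOn_def by auto

lemma RatOn_zero: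
  assumes "RatOn S E" "infinite Z" "Z \<subseteq> S" "\<And>t. t \<in> Z \<Longrightarrow> E t = 0" "z \<in> S"
  shows "E z = 0"
proof -
  obtain p q where pq: "\<forall>t\<in>S. poly q t \<noteq> 0 \<and> E t = poly p t / poly q t"
    using assms(1) unfolding RatOn_def by blast
  have "Z \<subseteq> {t. poly p t = 0}" using pq assms(3,4) by fastforce
  then have "infinite {t. poly p t = 0}" using assms(2) finite_subset by blast
  then have "p = 0" using poly_roots_finite by blast
  then show ?thesis using pq assms(5) by simp
qed

definition RF :: "complex set \<Rightarrow> (complex \<Rightarrow> pt) \<Rightarrow> bool" where
  "RF S X \<longleftrightarrow> RatOn S (\<lambda>t. qr (X t)) \<and> RatOn S (\<lambda>t. cr (X t)) \<and>
     (\<forall>i. RatOn S (\<lambda>t. A (X t) i) \<and> RatOn S (\<lambda>t. T (X t) i) \<and> RatOn S (\<lambda>t. TB (X t) i))"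

definition RatMap :: "(pt \<Rightarrow> pt option) \<Rightarrow> bool" where
  "RatMap m \<longleftrightarrow> (\<forall>S X. RF S X \<longrightarrow> RF {t\<in>S. m (X t) \<noteq> None} (\<lambda>t. the (m (X t))))"

lemma RF_mono: "RF S X \<Longrightarrow> S' \<subseteq> S \<Longrightarrow> RF S' X"
  unfolding RF_def using RatOn_mono by blast

lemma RF_cong: "RF S X \<Longrightarrow> (\<And>t. t \<in> S \<Longrightarrow> X t = Z t) \<Longrightarrow> RF S Z"
  unfolding RF_def by (metis (no_types, lifting) RatOn_cong)

lemma A_mod: "A x (i mod 3) = A x i" "T x (i mod 3) = T x i" "TB x (i mod 3) = TB x i"
  by (simp_all add: A_def T_def TB_def)

lemma RatMap_word: "(\<forall>m\<in>set ms. RatMap m) \<Longrightarrow> RatMap (word_map ms)"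
proof (induction ms)
  case Nil
  show ?case unfolding RatMap_def by simp
next
  case (Cons m ms)
  have m: "RatMap m" and ms: "RatMap (word_map ms)" using Cons by auto
  show ?case unfolding RatMap_def
  proof (intro allI impI)
    fix S X assume rf: "RF S X"
    define S' where "S' = {t\<in>S. m (X t) \<noteq> None}"
    define X' where "X' = (\<lambda>t. the (m (X t)))"
    have 1: "RF S' X'" using m rf unfolding RatMap_def S'_def X'_def by auto
    have 2: "RF {t\<in>S'. word_map ms (X' t) \<noteq> None} (\<lambda>t. the (word_map ms (X' t)))"
      using ms 1 unfolding RatMap_def by auto
    have e: "{t\<in>S'. word_map ms (X' t) \<noteq> None} = {t\<in>S. word_map (m # ms) (X t) \<noteq> None}"
      unfolding S'_def X'_def by (auto split: Option.bind_split)
    show "RF {t\<in>S. word_map (m # ms) (X t) \<noteq> None} (\<lambda>t. the (word_map (m # ms) (X t)))"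
      using 2 unfolding e
      by (rule RF_cong) (auto simp: X'_def split: Option.bind_split)
  qed
qed

lemma A_piT: "A (piT w) j = A w (j+1)" "T (piT w) j = T w (j+1)" "TB (piT w) j = TB w (j+1)"
  by (simp_all add: A_def T_def TB_def piT_def mod_Suc_eq mod_add_left_eq)

lemma A_sT: "A (sT i w) j = (if j mod 3 = i mod 3 then 1 / A w i else A w j * A w i)"
  "T (sT i w) j = (if j mod 3 = i mod 3 then
          (uu w i * T w (i+1) * TB w (i+2) + TB w (i+1) * T w (i+2)) / (uh w i * TB w i) else T w j)"
  "TB (sT i w) j = (if j mod 3 = i mod 3 then
          (vv w i * TB w (i+1) * T w (i+2) + T w (i+1) * TB w (i+2)) / (vh w i * T w i) else TB w j)"
  by (simp_all add: A_def T_def TB_def sT_def)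

lemma A_rT: "A (rT w) j = A w j" "T (rT w) j = TB w j" "TB (rT w) j = T w j"
  by (simp_all add: A_def T_def TB_def rT_def)

lemma A_w0T: "A (w0T w) j = A w j" "T (w0T w) j = T w j"
  "TB (w0T w) j = A w (j+1) ^ 2 *
                      (TB w j * T w (j+1) * T w (j+2)
                       + uu w (j+2) * T w j * TB w (j+1) * T w (j+2)
                       + T w j * T w (j+1) * TB w (j+2) / uu w (j+1))
                      / (A w (j+2) ^ 2 * TB w (j+1) * TB w (j+2))"
  by (simp_all add: A_def T_def TB_def w0T_def uu_def mod_Suc_eq mod_Suc_Suc_eq mod_add_left_eq)


lemma RF_get:
  assumes "RF S X"
  shows "RatOn S (\<lambda>t. qr (X t))" "RatOn S (\<lambda>t. cr (X t))" "RatOn S (\<lambda>t. A (X t) i)"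
    "RatOn S (\<lambda>t. T (X t) i)" "RatOn S (\<lambda>t. TB (X t) i)"
  using assms unfolding RF_def by auto

lemma RatOn_uu:
  assumes "RF S X" "\<And>t. t \<in> S \<Longrightarrow> qr (X t) \<noteq> 0 \<and> cr (X t) \<noteq> 0"
  shows "RatOn S (\<lambda>t. uu (X t) i)" "RatOn S (\<lambda>t. uh (X t) i)" "RatOn S (\<lambda>t. vv (X t) i)" "RatOn S (\<lambda>t. vh (X t) i)"
  unfolding uu_def uh_def vv_def vh_def using RF_get[OF assms(1)] assms(2)
  by (auto intro!: RatOn_divide RatOn_mult RatOn_power)

lemma RatMap_pi: "RatMap pi_map"
  unfolding RatMap_def
proof (intro allI impI)
  fix S X assume rf: "RF S X"
  have "RF S (\<lambda>t. piT (X t))" unfolding RF_def A_piT using RF_get[OF rf]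
    by (simp add: piT_def)
  then show "RF {t\<in>S. pi_map (X t) \<noteq> None} (\<lambda>t. the (pi_map (X t)))"
    by (simp add: pi_map_eq)
qed

lemma RatMap_r: "RatMap r_map"
  unfolding RatMap_def
proof (intro allI impI)
  fix S X assume rf: "RF S X"
  define S' where "S' = {t\<in>S. r_map (X t) \<noteq> None}"
  have S': "\<And>t. t \<in> S' \<Longrightarrow> qr (X t) \<noteq> 0 \<and> cr (X t) \<noteq> 0" "S' \<subseteq> S"
    unfolding S'_def by (auto simp: r_map_eq split: if_splits)
  have rf': "RF S' X" using RF_mono[OF rf S'(2)] .
  have "RF S' (\<lambda>t. rT (X t))" unfolding RF_def A_rT using RF_get[OF rf'] S'(1)
    by (auto simp: rT_def intro!: RatOn_divide)
  then show "RF {t\<in>S. r_map (X t) \<noteq> None} (\<lambda>t. the (r_map (X t)))"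
    unfolding S'_def[symmetric] by (rule RF_cong) (use S' in \<open>simp add: r_map_eq\<close>)
qed

lemma RatMap_s: "RatMap (s_map i)"
  unfolding RatMap_def
proof (intro allI impI)
  fix S X assume rf: "RF S X"
  define S' where "S' = {t\<in>S. s_map i (X t) \<noteq> None}"
  have S': "\<And>t. t \<in> S' \<Longrightarrow> qr (X t) \<noteq> 0 \<and> cr (X t) \<noteq> 0 \<and> A (X t) i \<noteq> 0 \<and> T (X t) i \<noteq> 0 \<and> TB (X t) i \<noteq> 0" "S' \<subseteq> S"
    unfolding S'_def by (auto simp: s_map_eq split: if_splits)
  have rf': "RF S' X" using RF_mono[OF rf S'(2)] .
  note R = RF_get[OF rf'] RatOn_uu[OF rf'] 
  have uhnz: "\<And>t. t \<in> S' \<Longrightarrow> uh (X t) i \<noteq> 0 \<and> vh (X t) i \<noteq> 0"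
    using S'(1) by (simp add: uh_def vh_def)
  have "RF S' (\<lambda>t. sT i (X t))" unfolding RF_def A_sT
  proof (intro conjI allI)
    fix j
    show "RatOn S' (\<lambda>t. if j mod 3 = i mod 3 then 1 / A (X t) i else A (X t) j * A (X t) i)"
      using R S'(1) by (cases "j mod 3 = i mod 3") (auto intro!: RatOn_divide)
    show "RatOn S' (\<lambda>t. if j mod 3 = i mod 3 then
          (uu (X t) i * T (X t) (i+1) * TB (X t) (i+2) + TB (X t) (i+1) * T (X t) (i+2)) / (uh (X t) i * TB (X t) i) else T (X t) j)"
      using S'(1) uhnz by (cases "j mod 3 = i mod 3") (auto intro!: RatOn_divide RatOn_add RatOn_mult simp: R)
    show "RatOn S' (\<lambda>t. if j mod 3 = i mod 3 then
          (vv (X t) i * TB (X t) (i+1) * T (X t) (i+2) + T (X t) (i+1) * TB (X t) (i+2)) / (vh (X t) i * T (X t) i) else TB (X t) j)"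
      using S'(1) uhnz by (cases "j mod 3 = i mod 3") (auto intro!: RatOn_divide RatOn_add RatOn_mult simp: R)
  qed (use R in \<open>simp_all add: sT_def\<close>)
  then show "RF {t\<in>S. s_map i (X t) \<noteq> None} (\<lambda>t. the (s_map i (X t)))"
    unfolding S'_def[symmetric] by (rule RF_cong) (use S' in \<open>simp add: s_map_eq\<close>)
qed

lemma RatMap_w0: "RatMap w0_map"
  unfolding RatMap_def
proof (intro allI impI)
  fix S X assume rf: "RF S X"
  define S' where "S' = {t\<in>S. w0_map (X t) \<noteq> None}"
  have S0: "\<And>t. t \<in> S' \<Longrightarrow> qr (X t) \<noteq> 0 \<and> cr (X t) \<noteq> 0 \<and> (\<forall>i<3. A (X t) i \<noteq> 0 \<and> TB (X t) i \<noteq> 0)" "S' \<subseteq> S"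
    unfolding S'_def by (auto simp: w0_map_eq split: if_splits)
  have S1: "A (X t) j \<noteq> 0 \<and> TB (X t) j \<noteq> 0" if "t \<in> S'" for t j
  proof -
    have "j mod 3 < 3" by simp
    then show ?thesis using S0(1)[OF that] A_mod[of "X t" j] by metis
  qed
  have S2: "uu (X t) j \<noteq> 0" if "t \<in> S'" for t j
    using S0(1)[OF that] S1[OF that] by (simp add: uu_def)
  have rf': "RF S' X" using RF_mono[OF rf S0(2)] .
  note R = RF_get[OF rf'] RatOn_uu[OF rf']
  have "RF S' (\<lambda>t. w0T (X t))" unfolding RF_def A_w0T
  proof (intro conjI allI)
    fix j
    show "RatOn S' (\<lambda>t. A (X t) (j + 1) ^ 2 *
                      (TB (X t) j * T (X t) (j+1) * T (X t) (j+2)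
                       + uu (X t) (j+2) * T (X t) j * TB (X t) (j+1) * T (X t) (j+2)
                       + T (X t) j * T (X t) (j+1) * TB (X t) (j+2) / uu (X t) (j+1))
                      / (A (X t) (j+2) ^ 2 * TB (X t) (j+1) * TB (X t) (j+2)))"
      using S0(1) S1 S2 by (auto intro!: RatOn_divide RatOn_add RatOn_mult RatOn_power simp: R)
  qed (use R S0(1) in \<open>auto simp: w0T_def intro!: RatOn_divide\<close>)
  then show "RF {t\<in>S. w0_map (X t) \<noteq> None} (\<lambda>t. the (w0_map (X t)))"
    unfolding S'_def[symmetric] by (rule RF_cong) (use S0 in \<open>simp add: w0_map_eq\<close>)
qed

lemma word_append: "word_map (l1 @ l2) x = Option.bind (word_map l1 x) (word_map l2)"
  by (induction l1 arbitrary: x) (auto split: Option.bind_split)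

lemma RatMap_R1: "RatMap R1_map" "RatMap R1inv_map" "RatMap T4_map" "RatMap T4inv_map"
  unfolding R1_map_def R1inv_map_def T4_map_def T4inv_map_def
  by (auto intro!: RatMap_word simp: RatMap_pi RatMap_s RatMap_r RatMap_w0)

lemma tauKN_word: "\<exists>ms. (\<forall>m\<in>set ms. RatMap m) \<and> (\<forall>x. tauKN j M x = map_option (\<lambda>y. T y 1) (word_map ms x))"
proof -
  define l1 where "l1 = (if j \<ge> 0 then replicate (nat j) R1_map else replicate (nat (- j)) R1inv_map)"
  define l2 where "l2 = (if M \<ge> 0 then replicate (nat M) T4_map else replicate (nat (- M)) T4inv_map)"
  have "ipow_map R1_map R1inv_map j = word_map l1" "ipow_map T4_map T4inv_map M = word_map l2"
    unfolding ipow_map_def l1_def l2_def by auto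
  then have "\<forall>x. tauKN j M x = map_option (\<lambda>y. T y 1) (word_map (l1 @ l2) x)"
    unfolding tauKN_def word_append by simp
  moreover have "\<forall>m\<in>set (l1 @ l2). RatMap m"
    unfolding l1_def l2_def using RatMap_R1 by auto
  ultimately show ?thesis by blast
qed

lemma RatOn_tauKN:
  assumes "RF S X"
  shows "RatOn {t\<in>S. tauKN j M (X t) \<noteq> None} (\<lambda>t. the (tauKN j M (X t)))"
proof -
  obtain ms where ms: "\<forall>m\<in>set ms. RatMap m" "\<forall>x. tauKN j M x = map_option (\<lambda>y. T y 1) (word_map ms x)"
    using tauKN_word by blast
  have "RF {t\<in>S. word_map ms (X t) \<noteq> None} (\<lambda>t. the (word_map ms (X t)))"
    using RatMap_word[OF ms(1)] assms unfolding RatMap_def by auto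
  then have r: "RatOn {t\<in>S. word_map ms (X t) \<noteq> None} (\<lambda>t. T (the (word_map ms (X t))) 1)"
    using RF_get(4) by blast
  have e: "{t\<in>S. tauKN j M (X t) \<noteq> None} = {t\<in>S. word_map ms (X t) \<noteq> None}"
    using ms(2) by auto
  show ?thesis unfolding e
    by (rule RatOn_cong[OF r]) (auto simp: ms(2) option.map_sel)
qed

definition cq :: "real \<Rightarrow> complex \<Rightarrow> complex \<Rightarrow> complex" where
  "cq C z t = complex_of_real (Re z + C) + t * complex_of_real (Im z) + complex_of_real C * t ^ 2"

lemma cq_i: "cq C z \<i> = z"
  by (simp add: cq_def complex_eq_iff)

lemma cq_real: "cq C z (complex_of_real s) = complex_of_real (Re z + C + s * Im z + C * s ^ 2)"
  by (simp add: cq_def)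

lemma cq_pos:
  assumes "\<bar>Re z\<bar> + \<bar>Im z\<bar> < C" "s \<in> {-1..1}"
  shows "pos (cq C z (complex_of_real s))"
proof -
  have s1: "\<bar>s\<bar> \<le> 1" using assms(2) by auto
  have "\<bar>s * Im z\<bar> \<le> \<bar>Im z\<bar>" unfolding abs_mult using mult_right_mono[OF s1, of "\<bar>Im z\<bar>"] by simp
  then have "0 < Re z + C + s * Im z + C * s ^ 2"
    using assms(1) by (smt (verit) zero_le_power2 mult_nonneg_nonneg)
  then show ?thesis unfolding cq_real pos_def by blast
qed

lemma RatOn_cq[intro]: "RatOn S (\<lambda>t. cq C z t)"
  unfolding cq_def by (intro RatOn_add RatOn_mult RatOn_power RatOn_const RatOn_id)

theorem proposition3p5:
  fixes x :: pt and k N :: int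
  assumes "qr x \<noteq> 0" and "cr x \<noteq> 0" and "ar x 0 \<noteq> 0"
    and "ar x 0 * ar x 1 * ar x 2 = qr x ^ 2"
    and "ar x 2 = qr x"
    and "\<forall>j\<in>{k-2..k+2}. \<forall>M\<in>{N-1..N+1}. tauKN j M x \<noteq> None"
  shows
   "(let \<tau> = (\<lambda>j M. the (tauKN j M x)); Q = qr x ^ 2; \<gamma> = cr x; \<alpha>\<^sub>0 = ar x 0 in
      qr x powi (-3*k+4*N+2) * \<gamma>^2 * \<alpha>\<^sub>0 powi (-3) * \<tau> (k+1) N * \<tau> (k-2) (N+1)
        - Q powi (-3*k+4*N+2) * \<gamma>^4 * \<alpha>\<^sub>0 powi (-6) * \<tau> (k-1) N * \<tau> k (N+1)
        - \<tau> (k-1) (N+1) * \<tau> k N = 0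
    \<and> qr x powi (-3*k-4*N-2) * \<gamma> powi (-2) * \<alpha>\<^sub>0 powi (-3) * \<tau> (k+1) (N+1) * \<tau> (k-2) N
        - Q powi (-3*k-4*N-2) * \<gamma> powi (-4) * \<alpha>\<^sub>0 powi (-6) * \<tau> k N * \<tau> (k-1) (N+1)
        - \<tau> k (N+1) * \<tau> (k-1) N = 0
    \<and> \<tau> k (N+1) * \<tau> (k+1) (N-1)
        - qr x powi (k-4*N+1) * \<gamma> powi (-2) * \<alpha>\<^sub>0 * \<tau> (k+2) N * \<tau> (k-1) N
        - Q powi (-k+4*N-1) * \<gamma>^4 * \<alpha>\<^sub>0 powi (-2) * \<tau> k N * \<tau> (k+1) N = 0)"
proof -
  define e1 where "e1 y = qr y powi (-3*k+4*N+2) * cr y^2 * ar y 0 powi (-3) * the (tauKN (k+1) N y) * the (tauKN (k-2) (N+1) y)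
        - (qr y ^ 2) powi (-3*k+4*N+2) * cr y^4 * ar y 0 powi (-6) * the (tauKN (k-1) N y) * the (tauKN k (N+1) y)
        - the (tauKN (k-1) (N+1) y) * the (tauKN k N y)" for y
  define e2 where "e2 y = qr y powi (-3*k-4*N-2) * cr y powi (-2) * ar y 0 powi (-3) * the (tauKN (k+1) (N+1) y) * the (tauKN (k-2) N y)
        - (qr y ^ 2) powi (-3*k-4*N-2) * cr y powi (-4) * ar y 0 powi (-6) * the (tauKN k N y) * the (tauKN (k-1) (N+1) y)
        - the (tauKN k (N+1) y) * the (tauKN (k-1) N y)" for y
  define e3 where "e3 y = the (tauKN k (N+1) y) * the (tauKN (k+1) (N-1) y)
        - qr y powi (k-4*N+1) * cr y powi (-2) * ar y 0 * the (tauKN (k+2) N y) * the (tauKN (k-1) N y)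
        - (qr y ^ 2) powi (-k+4*N-1) * cr y^4 * ar y 0 powi (-2) * the (tauKN k N y) * the (tauKN (k+1) N y)" for y
  have eq: "(let \<tau> = (\<lambda>j M. the (tauKN j M y)); Q = qr y ^ 2; \<gamma> = cr y; \<alpha>\<^sub>0 = ar y 0 in
      qr y powi (-3*k+4*N+2) * \<gamma>^2 * \<alpha>\<^sub>0 powi (-3) * \<tau> (k+1) N * \<tau> (k-2) (N+1)
        - Q powi (-3*k+4*N+2) * \<gamma>^4 * \<alpha>\<^sub>0 powi (-6) * \<tau> (k-1) N * \<tau> k (N+1)
        - \<tau> (k-1) (N+1) * \<tau> k N = 0
    \<and> qr y powi (-3*k-4*N-2) * \<gamma> powi (-2) * \<alpha>\<^sub>0 powi (-3) * \<tau> (k+1) (N+1) * \<tau> (k-2) N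
        - Q powi (-3*k-4*N-2) * \<gamma> powi (-4) * \<alpha>\<^sub>0 powi (-6) * \<tau> k N * \<tau> (k-1) (N+1)
        - \<tau> k (N+1) * \<tau> (k-1) N = 0
    \<and> \<tau> k (N+1) * \<tau> (k+1) (N-1)
        - qr y powi (k-4*N+1) * \<gamma> powi (-2) * \<alpha>\<^sub>0 * \<tau> (k+2) N * \<tau> (k-1) N
        - Q powi (-k+4*N-1) * \<gamma>^4 * \<alpha>\<^sub>0 powi (-2) * \<tau> k N * \<tau> (k+1) N = 0)
    \<longleftrightarrow> e1 y = 0 \<and> e2 y = 0 \<and> e3 y = 0" for y
    unfolding Let_def e1_def e2_def e3_def ..
  define B where "B z = \<bar>Re z\<bar> + \<bar>Im z\<bar>" for z
  define C where "C = 1 + B (qr x) + B (cr x) + B (ar x 0) + B (tau x 0) + B (tau x 1) + B (tau x 2)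
     + B (taub x 0) + B (taub x 1) + B (taub x 2)"
  have B0: "0 \<le> B z" for z unfolding B_def by simp
  have CB: "B (qr x) < C" "B (cr x) < C" "B (ar x 0) < C" "B (tau x 0) < C" "B (tau x 1) < C" "B (tau x 2) < C"
     "B (taub x 0) < C" "B (taub x 1) < C" "B (taub x 2) < C"
    unfolding C_def using B0[of "qr x"] B0[of "cr x"] B0[of "ar x 0"] B0[of "tau x 0"] B0[of "tau x 1"]
      B0[of "tau x 2"] B0[of "taub x 0"] B0[of "taub x 1"] B0[of "taub x 2"] by linarith+
  define XC where "XC t = \<lparr> qr = cq C (qr x) t,
      ar = (\<lambda>j. if j = 1 then cq C (qr x) t / cq C (ar x 0) t else if j = 2 then cq C (qr x) t else cq C (ar x j) t),
      cr = cq C (cr x) t, tau = (\<lambda>j. cq C (tau x j) t), taub = (\<lambda>j. cq C (taub x j) t) \<rparr>" for t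
  have X: "qr (XC t) = cq C (qr x) t" "cr (XC t) = cq C (cr x) t" "ar (XC t) 0 = cq C (ar x 0) t"
      "ar (XC t) 1 = cq C (qr x) t / cq C (ar x 0) t" "ar (XC t) 2 = cq C (qr x) t"
      "tau (XC t) i = cq C (tau x i) t" "taub (XC t) i = cq C (taub x i) t" for i t
      unfolding XC_def by simp_all
  have "ar x 0 * ar x 1 * qr x = qr x * qr x" using assms(4,5) by (metis power2_eq_square)
  then have "ar x 0 * ar x 1 = qr x" using assms(1) by (metis mult_right_cancel)
  then have a1: "ar x 1 = qr x / ar x 0" using assms(3) by (metis nonzero_mult_div_cancel_left)
  have Xi: "XC \<i> = x"
    unfolding XC_def cq_i using a1 assms(5) by (cases x) (auto simp: fun_eq_iff)
  define S0 where "S0 = {t. cq C (ar x 0) t \<noteq> 0}"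
  have RF0: "RF S0 XC"
    unfolding RF_def
  proof (intro conjI allI)
    fix i
    show "RatOn S0 (\<lambda>t. A (XC t) i)"
    proof -
      have "RatOn S0 (\<lambda>t. if i mod 3 = 1 then cq C (qr x) t / cq C (ar x 0) t else if i mod 3 = 2 then cq C (qr x) t else cq C (ar x (i mod 3)) t)"
        by (cases "i mod 3 = 1"; cases "i mod 3 = 2") (auto intro!: RatOn_divide simp: S0_def)
      then show ?thesis by (simp add: A_def XC_def)
    qed
  qed (auto simp: XC_def T_def TB_def)
  define S where "S = {t\<in>S0. qr (XC t) \<noteq> 0 \<and> cr (XC t) \<noteq> 0 \<and> (\<forall>j\<in>{k-2..k+2}. \<forall>M\<in>{N-1..N+1}. tauKN j M (XC t) \<noteq> None)}"
  have SS: "S \<subseteq> S0" unfolding S_def by auto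
  have RF1: "RF S XC" using RF_mono[OF RF0 SS] .
  have nzS: "qr (XC t) \<noteq> 0" "cr (XC t) \<noteq> 0" "ar (XC t) 0 \<noteq> 0" "qr (XC t) ^ 2 \<noteq> 0" if "t \<in> S" for t
    using that unfolding S_def S0_def X by auto
  have tR: "RatOn S (\<lambda>t. the (tauKN j M (XC t)))" if "j \<in> {k-2..k+2}" "M \<in> {N-1..N+1}" for j M
    by (rule RatOn_mono[OF RatOn_tauKN[OF RF0]]) (use that in \<open>auto simp: S_def\<close>)
  have qR: "RatOn S (\<lambda>t. qr (XC t))" "RatOn S (\<lambda>t. cr (XC t))" "RatOn S (\<lambda>t. ar (XC t) 0)"
    using RF_get(1,2)[OF RF1] RF_get(3)[OF RF1, of 0] by (simp_all add: A_def)
  define Z where "Z = complex_of_real ` {-1..1}"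
  have Zinf: "infinite Z" unfolding Z_def
    using finite_imageD[of complex_of_real "{-1..1::real}"] inj_of_real infinite_Icc[of "-1::real" 1]
    by (auto simp: inj_on_def)
  have GZ: "Good (XC t)" if tZ: "t \<in> Z" for t
  proof -
    obtain s where s: "s \<in> {-1..1}" "t = complex_of_real s" using tZ unfolding Z_def by auto
    have p: "pos (cq C (qr x) t)" "pos (cq C (cr x) t)" "pos (cq C (ar x 0) t)"
      "pos (cq C (tau x 0) t)" "pos (cq C (tau x 1) t)" "pos (cq C (tau x 2) t)"
      "pos (cq C (taub x 0) t)" "pos (cq C (taub x 1) t)" "pos (cq C (taub x 2) t)"
      unfolding s(2) by (rule cq_pos[OF _ s(1)], rule CB[unfolded B_def])+
    have m: "cq C (ar x 0) t * (cq C (qr x) t / cq C (ar x 0) t) = cq C (qr x) t"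
      using pos_nz[OF p(3)] by simp
    show ?thesis
      by (rule GoodI) (simp_all only: X p pos_div[OF p(1) p(3)] m)
  qed
  have ZS: "Z \<subseteq> S"
  proof
    fix t assume t: "t \<in> Z"
    have g: "Good (XC t)" using GZ[OF t] .
    have a0: "cq C (ar x 0) t \<noteq> 0" using GoodNZ(3)[OF g] unfolding X .
    have "\<forall>j M. tauKN j M (XC t) \<noteq> None" by (intro allI) (simp only: tauKN_Good[OF g] option.distinct(2) not_False_eq_True)
    then show "t \<in> S" using a0 GoodNZ(1,2)[OF g] unfolding S_def S0_def by blast
  qed
  have iS: "\<i> \<in> S" unfolding S_def S0_def mem_Collect_eq Xi cq_i using assms(1,2,3,6) by blast
  have E0: "e1 (XC t) = 0 \<and> e2 (XC t) = 0 \<and> e3 (XC t) = 0" if "t \<in> Z" for t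
    using core[OF GZ[OF that], of k N] unfolding eq .
  have R1: "RatOn S (\<lambda>t. e1 (XC t))" unfolding e1_def
    by (intro RatOn_diff RatOn_mult RatOn_powi RatOn_power qR tR; simp add: nzS)
  have R2: "RatOn S (\<lambda>t. e2 (XC t))" unfolding e2_def
    by (intro RatOn_diff RatOn_mult RatOn_powi RatOn_power qR tR; simp add: nzS)
  have R3: "RatOn S (\<lambda>t. e3 (XC t))" unfolding e3_def
    by (intro RatOn_diff RatOn_mult RatOn_powi RatOn_power qR tR; simp add: nzS)
  have "e1 (XC \<i>) = 0" by (rule RatOn_zero[OF R1 Zinf ZS _ iS]) (use E0 in auto)
  moreover have "e2 (XC \<i>) = 0" by (rule RatOn_zero[OF R2 Zinf ZS _ iS]) (use E0 in auto)
  moreover have "e3 (XC \<i>) = 0" by (rule RatOn_zero[OF R3 Zinf ZS _ iS]) (use E0 in auto)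
  ultimately show ?thesis unfolding eq Xi by simp
qed

end
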